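(* Consider a discrete memoryless wiretap channel with input alphabet $\mathcal X=\{1,\ldots,n\}$, main channel $p(y|x)$ and eavesdropper channel $p(z|x)$, which is dominantly cyclic shift symmetric. Then for every $\mu\ge0$, $$\sup_{U\to V\to X\to(Y,Z)}\big[\mu I(V;Y)+I(V;Y|U)-I(V;Z|U)\big]=\max_{V\to X\to(Y,Z),\ |\mathcal V|\le n}\big[(\mu+1)I(V;Y)-I(V;Z)\big],$$ (suprema over finite-alphabet auxiliary variables), i.e. rate splitting ($U$ non-constant) does not improve the rate-equivocation region and an optimal channel prefix $V$ with at most $n$ values exists. In particular the secrecy capacity satisfies $$C_s=\max_{P_x}f(P_x)-\min_{P_x}f(P_x).$$
   Context: $f(P_x)=I(X;Y)-I(X;Z)$ for $X\sim P_x$, and $C_s=\sup_{V\to X\to(Y,Z)}[I(V;Y)-I(V;Z)]$ is the secrecy capacity. A channel with input alphabet $\{1,\ldots,n\}$ is cyclic shift symmetric if $I(X;Y)$ is invariant under cyclic shifts of the input distribution; a wiretap channel is cyclic shift symmetric if both its channels are; it is dominantly cyclic shift symmetric if moreover $f(\mathbf u)\ge f(P_x)$ for all $P_x$, with $\mathbf u$ the uniform distribution. The left-hand supremum, over $\mu\ge0$, traces the upper right boundary of the rate-equivocation region. *)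

theory Defs
  imports Complex_Main
begin

definition is_dist :: "'a set \<Rightarrow> ('a \<Rightarrow> real) \<Rightarrow> bool" where
  "is_dist A P \<longleftrightarrow> (\<forall>x\<in>A. 0 \<le> P x) \<and> sum P A = 1"

definition mi :: "'a set \<Rightarrow> 'b set \<Rightarrow> ('a \<Rightarrow> 'b \<Rightarrow> real) \<Rightarrow> real" where
  "mi A B J = (\<Sum>a\<in>A. \<Sum>b\<in>B. if J a b = 0 then 0 else
      J a b * log 2 (J a b / ((\<Sum>b'\<in>B. J a b') * (\<Sum>a'\<in>A. J a' b))))"

definition cmi :: "'c set \<Rightarrow> 'a set \<Rightarrow> 'b set \<Rightarrow> ('c \<Rightarrow> 'a \<Rightarrow> 'b \<Rightarrow> real) \<Rightarrow> real" where
  "cmi C A B J = (\<Sum>c\<in>C. \<Sum>a\<in>A. \<Sum>b\<in>B. if J c a b = 0 then 0 else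
      J c a b * log 2 (J c a b * (\<Sum>a'\<in>A. \<Sum>b'\<in>B. J c a' b') /
        ((\<Sum>b'\<in>B. J c a b') * (\<Sum>a'\<in>A. J c a' b))))"

(* A DMC with input alphabet {0..<n} (standing for {1..n}) and finite output type *)
definition channel :: "nat \<Rightarrow> (nat \<Rightarrow> 'y::finite \<Rightarrow> real) \<Rightarrow> bool" where
  "channel n W \<longleftrightarrow> (\<forall>x<n. is_dist UNIV (W x))"

definition Iin :: "nat \<Rightarrow> (nat \<Rightarrow> 'y::finite \<Rightarrow> real) \<Rightarrow> (nat \<Rightarrow> real) \<Rightarrow> real" where
  "Iin n W P = mi {0..<n} UNIV (\<lambda>x y. P x * W x y)"

definition fsec :: "nat \<Rightarrow> (nat \<Rightarrow> 'y::finite \<Rightarrow> real) \<Rightarrow> (nat \<Rightarrow> 'z::finite \<Rightarrow> real)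
    \<Rightarrow> (nat \<Rightarrow> real) \<Rightarrow> real" where
  "fsec n W Q P = Iin n W P - Iin n Q P"

definition cyclic_shift_symmetric :: "nat \<Rightarrow> (nat \<Rightarrow> 'y::finite \<Rightarrow> real) \<Rightarrow> bool" where
  "cyclic_shift_symmetric n W \<longleftrightarrow>
     (\<forall>P. is_dist {0..<n} P \<longrightarrow> (\<forall>k::nat. Iin n W (\<lambda>x. P ((x + k) mod n)) = Iin n W P))"

definition uniform_in :: "nat \<Rightarrow> nat \<Rightarrow> real" where
  "uniform_in n = (\<lambda>x. 1 / real n)"

definition dominantly_cyclic_shift_symmetric ::
  "nat \<Rightarrow> (nat \<Rightarrow> 'y::finite \<Rightarrow> real) \<Rightarrow> (nat \<Rightarrow> 'z::finite \<Rightarrow> real) \<Rightarrow> bool" where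
  "dominantly_cyclic_shift_symmetric n W Q \<longleftrightarrow>
     cyclic_shift_symmetric n W \<and> cyclic_shift_symmetric n Q \<and>
     (\<forall>P. is_dist {0..<n} P \<longrightarrow> fsec n W Q P \<le> fsec n W Q (uniform_in n))"

definition kernel :: "nat \<Rightarrow> nat \<Rightarrow> (nat \<Rightarrow> nat \<Rightarrow> real) \<Rightarrow> bool" where
  "kernel b n q \<longleftrightarrow> (\<forall>v<b. is_dist {0..<n} (q v))"

definition jointVY :: "nat \<Rightarrow> (nat \<Rightarrow> 'y::finite \<Rightarrow> real) \<Rightarrow> (nat \<Rightarrow> real) \<Rightarrow> (nat \<Rightarrow> nat \<Rightarrow> real)
    \<Rightarrow> nat \<Rightarrow> 'y \<Rightarrow> real" where
  "jointVY n W p q v y = p v * (\<Sum>x<n. q v x * W x y)"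

definition IVY :: "nat \<Rightarrow> (nat \<Rightarrow> 'y::finite \<Rightarrow> real) \<Rightarrow> nat \<Rightarrow> (nat \<Rightarrow> real) \<Rightarrow> (nat \<Rightarrow> nat \<Rightarrow> real) \<Rightarrow> real" where
  "IVY n W b p q = mi {0..<b} UNIV (jointVY n W p q)"

definition jointUVY :: "nat \<Rightarrow> (nat \<Rightarrow> 'y::finite \<Rightarrow> real) \<Rightarrow> (nat \<Rightarrow> nat \<Rightarrow> real) \<Rightarrow> (nat \<Rightarrow> nat \<Rightarrow> real)
    \<Rightarrow> nat \<Rightarrow> nat \<Rightarrow> 'y \<Rightarrow> real" where
  "jointUVY n W puv q u v y = puv u v * (\<Sum>x<n. q v x * W x y)"

definition IVY_U :: "nat \<Rightarrow> (nat \<Rightarrow> 'y::finite \<Rightarrow> real) \<Rightarrow> nat \<Rightarrow> nat \<Rightarrow> (nat \<Rightarrow> nat \<Rightarrow> real)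
    \<Rightarrow> (nat \<Rightarrow> nat \<Rightarrow> real) \<Rightarrow> real" where
  "IVY_U n W a b puv q = cmi {0..<a} {0..<b} UNIV (jointUVY n W puv q)"

definition is_dist2 :: "nat \<Rightarrow> nat \<Rightarrow> (nat \<Rightarrow> nat \<Rightarrow> real) \<Rightarrow> bool" where
  "is_dist2 a b puv \<longleftrightarrow> (\<forall>u<a. \<forall>v<b. 0 \<le> puv u v) \<and> (\<Sum>u<a. \<Sum>v<b. puv u v) = 1"

definition rate_split_values ::
  "nat \<Rightarrow> (nat \<Rightarrow> 'y::finite \<Rightarrow> real) \<Rightarrow> (nat \<Rightarrow> 'z::finite \<Rightarrow> real) \<Rightarrow> real \<Rightarrow> real set" where
  "rate_split_values n W Q \<mu> =
     {\<mu> * IVY n W b (\<lambda>v. \<Sum>u<a. puv u v) q + IVY_U n W a b puv q - IVY_U n Q a b puv q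
       | a b puv q. is_dist2 a b puv \<and> kernel b n q}"

definition prefix_values ::
  "nat \<Rightarrow> (nat \<Rightarrow> 'y::finite \<Rightarrow> real) \<Rightarrow> (nat \<Rightarrow> 'z::finite \<Rightarrow> real) \<Rightarrow> real \<Rightarrow> real set" where
  "prefix_values n W Q \<mu> =
     {(\<mu> + 1) * IVY n W b p q - IVY n Q b p q
       | b p q. b \<le> n \<and> is_dist {0..<b} p \<and> kernel b n q}"

definition secrecy_capacity ::
  "nat \<Rightarrow> (nat \<Rightarrow> 'y::finite \<Rightarrow> real) \<Rightarrow> (nat \<Rightarrow> 'z::finite \<Rightarrow> real) \<Rightarrow> real" where
  "secrecy_capacity n W Q =
     Sup {IVY n W b p q - IVY n Q b p q | b p q. is_dist {0..<b} p \<and> kernel b n q}"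

end

theory Submission
  imports Defs "HOL-Analysis.Analysis" "HOL-Real_Asymp.Real_Asymp"
begin


definition phi :: "real \<Rightarrow> real" where "phi t = t * log 2 t"

lemma phi_0[simp]: "phi 0 = 0" and phi_1[simp]: "phi 1 = 0"
  by (auto simp: phi_def)

lemma phi_mult: assumes "0 \<le> a" "0 \<le> b" shows "phi (a*b) = a * phi b + b * phi a"
proof (cases "a = 0 \<or> b = 0")
  case True then show ?thesis by (auto simp: phi_def)
next
  case False
  then have "0 < a" "0 < b" using assms by auto
  then show ?thesis by (simp add: phi_def log_mult algebra_simps)
qed

lemma mi_ent:
  assumes fA: "finite A" and fB: "finite B" and nn: "\<And>a b. a\<in>A \<Longrightarrow> b\<in>B \<Longrightarrow> 0 \<le> J a b"
  shows "mi A B J = (\<Sum>a\<in>A. \<Sum>b\<in>B. phi (J a b)) - (\<Sum>a\<in>A. phi (\<Sum>b\<in>B. J a b))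
      - (\<Sum>b\<in>B. phi (\<Sum>a\<in>A. J a b))"
proof -
  define R where "R a = (\<Sum>b\<in>B. J a b)" for a
  define C where "C b = (\<Sum>a\<in>A. J a b)" for b
  have trm: "(if J a b = 0 then 0 else J a b * log 2 (J a b / ((\<Sum>b'\<in>B. J a b') * (\<Sum>a'\<in>A. J a' b))))
      = phi (J a b) - J a b * log 2 (R a) - J a b * log 2 (C b)" if "a \<in> A" "b \<in> B" for a b
  proof (cases "J a b = 0")
    case True then show ?thesis by (simp add: phi_def)
  next
    case False
    with nn[OF that] have p: "0 < J a b" by auto
    have "J a b \<le> R a" unfolding R_def by (rule member_le_sum) (use nn that fA fB in auto)
    with p have r: "0 < R a" by auto
    have "J a b \<le> C b" unfolding C_def by (rule member_le_sum[of a A "\<lambda>a. J a b"]) (use nn that fA fB in auto)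
    with p have c: "0 < C b" by auto
    show ?thesis using p r c False
      by (simp add: R_def[symmetric] C_def[symmetric] log_divide log_mult phi_def algebra_simps)
  qed
  have "mi A B J = (\<Sum>a\<in>A. \<Sum>b\<in>B. phi (J a b) - J a b * log 2 (R a) - J a b * log 2 (C b))"
    unfolding mi_def by (intro sum.cong refl) (simp add: trm)
  also have "\<dots> = (\<Sum>a\<in>A. \<Sum>b\<in>B. phi (J a b)) - (\<Sum>a\<in>A. \<Sum>b\<in>B. J a b * log 2 (R a))
      - (\<Sum>a\<in>A. \<Sum>b\<in>B. J a b * log 2 (C b))"
    by (simp add: sum_subtractf)
  also have "(\<Sum>a\<in>A. \<Sum>b\<in>B. J a b * log 2 (R a)) = (\<Sum>a\<in>A. phi (R a))"
    by (simp add: phi_def R_def sum_distrib_right)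
  also have "(\<Sum>a\<in>A. \<Sum>b\<in>B. J a b * log 2 (C b)) = (\<Sum>b\<in>B. phi (C b))"
    by (subst sum.swap) (simp add: phi_def C_def sum_distrib_right)
  finally show ?thesis by (simp add: R_def C_def)
qed

lemma cmi_ent:
  assumes fC: "finite C" and fA: "finite A" and fB: "finite B"
    and nn: "\<And>c a b. c\<in>C \<Longrightarrow> a\<in>A \<Longrightarrow> b\<in>B \<Longrightarrow> 0 \<le> J c a b"
  shows "cmi C A B J = (\<Sum>c\<in>C. \<Sum>a\<in>A. \<Sum>b\<in>B. phi (J c a b)) + (\<Sum>c\<in>C. phi (\<Sum>a\<in>A. \<Sum>b\<in>B. J c a b))
      - (\<Sum>c\<in>C. \<Sum>a\<in>A. phi (\<Sum>b\<in>B. J c a b)) - (\<Sum>c\<in>C. \<Sum>b\<in>B. phi (\<Sum>a\<in>A. J c a b))"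
proof -
  define T where "T c = (\<Sum>a\<in>A. \<Sum>b\<in>B. J c a b)" for c
  define R where "R c a = (\<Sum>b\<in>B. J c a b)" for c a
  define K where "K c b = (\<Sum>a\<in>A. J c a b)" for c b
  have trm: "(if J c a b = 0 then 0 else J c a b * log 2 (J c a b * (\<Sum>a'\<in>A. \<Sum>b'\<in>B. J c a' b') /
        ((\<Sum>b'\<in>B. J c a b') * (\<Sum>a'\<in>A. J c a' b))))
      = phi (J c a b) + J c a b * log 2 (T c) - J c a b * log 2 (R c a) - J c a b * log 2 (K c b)"
    if "c \<in> C" "a \<in> A" "b \<in> B" for c a b
  proof (cases "J c a b = 0")
    case True then show ?thesis by (simp add: phi_def)
  next
    case False
    with nn[OF that] have p: "0 < J c a b" by auto
    have "J c a b \<le> R c a" unfolding R_def by (rule member_le_sum) (use nn that fA fB in auto)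
    with p have r: "0 < R c a" by auto
    have "J c a b \<le> K c b" unfolding K_def by (rule member_le_sum[of a A "\<lambda>a. J c a b"]) (use nn that fA fB in auto)
    with p have k: "0 < K c b" by auto
    have "R c a \<le> T c" unfolding T_def R_def
      by (rule member_le_sum[of a A "\<lambda>a. \<Sum>b\<in>B. J c a b"]) (use nn that fA fB in \<open>auto intro: sum_nonneg\<close>)
    with r have t: "0 < T c" by auto
    have RT: "sum (R c) A = T c" by (simp add: T_def R_def)
    show ?thesis using p r k t False RT
      by (simp add: R_def[symmetric] K_def[symmetric] T_def[symmetric] log_divide log_mult phi_def algebra_simps)
  qed
  have "cmi C A B J = (\<Sum>c\<in>C. \<Sum>a\<in>A. \<Sum>b\<in>B. phi (J c a b) + J c a b * log 2 (T c) - J c a b * log 2 (R c a) - J c a b * log 2 (K c b))"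
    unfolding cmi_def by (intro sum.cong refl) (simp add: trm)
  also have "\<dots> = (\<Sum>c\<in>C. \<Sum>a\<in>A. \<Sum>b\<in>B. phi (J c a b)) + (\<Sum>c\<in>C. \<Sum>a\<in>A. \<Sum>b\<in>B. J c a b * log 2 (T c))
      - (\<Sum>c\<in>C. \<Sum>a\<in>A. \<Sum>b\<in>B. J c a b * log 2 (R c a)) - (\<Sum>c\<in>C. \<Sum>a\<in>A. \<Sum>b\<in>B. J c a b * log 2 (K c b))"
    by (simp add: sum_subtractf sum.distrib)
  also have "(\<Sum>c\<in>C. \<Sum>a\<in>A. \<Sum>b\<in>B. J c a b * log 2 (T c)) = (\<Sum>c\<in>C. phi (T c))"
    by (simp add: phi_def T_def sum_distrib_right)
  also have "(\<Sum>c\<in>C. \<Sum>a\<in>A. \<Sum>b\<in>B. J c a b * log 2 (R c a)) = (\<Sum>c\<in>C. \<Sum>a\<in>A. phi (R c a))"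
    by (simp add: phi_def R_def sum_distrib_right)
  also have "(\<Sum>c\<in>C. \<Sum>a\<in>A. \<Sum>b\<in>B. J c a b * log 2 (K c b)) = (\<Sum>c\<in>C. \<Sum>b\<in>B. phi (K c b))"
    by (intro sum.cong refl, subst sum.swap) (simp add: phi_def K_def sum_distrib_right)
  finally show ?thesis by (simp add: R_def K_def T_def)
qed




definition En :: "('y::finite \<Rightarrow> real) \<Rightarrow> real" where "En R = (\<Sum>y\<in>UNIV. phi (R y))"
definition outp :: "nat \<Rightarrow> (nat \<Rightarrow> 'y::finite \<Rightarrow> real) \<Rightarrow> (nat \<Rightarrow> real) \<Rightarrow> 'y \<Rightarrow> real" where
  "outp n W P y = (\<Sum>x<n. P x * W x y)"
definition Lw :: "nat \<Rightarrow> (nat \<Rightarrow> 'y::finite \<Rightarrow> real) \<Rightarrow> (nat \<Rightarrow> real) \<Rightarrow> real" where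
  "Lw n W P = (\<Sum>x<n. P x * En (W x))"
definition Ih :: "nat \<Rightarrow> (nat \<Rightarrow> 'y::finite \<Rightarrow> real) \<Rightarrow> (nat \<Rightarrow> real) \<Rightarrow> real" where
  "Ih n W P = Lw n W P - En (outp n W P) + phi (\<Sum>x<n. P x)"

lemma chW_nn: "channel n W \<Longrightarrow> x < n \<Longrightarrow> 0 \<le> W x y"
  by (auto simp: channel_def is_dist_def)
lemma chW_sum: "channel n W \<Longrightarrow> x < n \<Longrightarrow> (\<Sum>y\<in>UNIV. W x y) = 1"
  by (auto simp: channel_def is_dist_def)

lemma outp_nn: "channel n W \<Longrightarrow> (\<And>x. x < n \<Longrightarrow> 0 \<le> P x) \<Longrightarrow> 0 \<le> outp n W P y"
  unfolding outp_def by (intro sum_nonneg mult_nonneg_nonneg) (auto simp: chW_nn)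

lemma outp_sum: "channel n W \<Longrightarrow> (\<Sum>y\<in>UNIV. outp n W P y) = (\<Sum>x<n. P x)"
  unfolding outp_def by (subst sum.swap) (simp add: sum_distrib_left[symmetric] chW_sum)

lemma Iin_eq:
  assumes ch: "channel n W" and nn: "\<And>x. x < n \<Longrightarrow> 0 \<le> P x"
  shows "Iin n W P = Lw n W P - En (outp n W P)"
proof -
  have "Iin n W P = (\<Sum>x<n. \<Sum>y\<in>UNIV. phi (P x * W x y)) - (\<Sum>x<n. phi (\<Sum>y\<in>UNIV. P x * W x y))
      - (\<Sum>y\<in>UNIV. phi (\<Sum>x<n. P x * W x y))"
    unfolding Iin_def atLeast0LessThan
    by (rule mi_ent) (auto intro!: mult_nonneg_nonneg nn chW_nn[OF ch])
  also have "(\<Sum>x<n. \<Sum>y\<in>UNIV. phi (P x * W x y)) = (\<Sum>x<n. P x * En (W x) + phi (P x))"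
  proof (intro sum.cong refl)
    fix x assume "x \<in> {..<n}"
    then have x: "x < n" by auto
    have "(\<Sum>y\<in>UNIV. phi (P x * W x y)) = (\<Sum>y\<in>UNIV. P x * phi (W x y) + W x y * phi (P x))"
      by (intro sum.cong refl phi_mult nn x chW_nn[OF ch])
    also have "\<dots> = P x * En (W x) + phi (P x)"
      by (simp add: sum.distrib En_def sum_distrib_left sum_distrib_right[symmetric] chW_sum[OF ch x])
    finally show "(\<Sum>y\<in>UNIV. phi (P x * W x y)) = P x * En (W x) + phi (P x)" .
  qed
  also have "(\<Sum>x<n. phi (\<Sum>y\<in>UNIV. P x * W x y)) = (\<Sum>x<n. phi (P x))"
    by (intro sum.cong refl) (simp add: sum_distrib_left[symmetric] chW_sum[OF ch])
  finally show ?thesis by (simp add: sum.distrib Lw_def En_def outp_def)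
qed

lemma Ih_eq:
  assumes ch: "channel n W" and nn: "\<And>x. x < n \<Longrightarrow> 0 \<le> P x"
  shows "Ih n W P = Iin n W P + phi (\<Sum>x<n. P x)"
  using Iin_eq[OF assms] by (simp add: Ih_def)

lemma Ih_dist:
  assumes ch: "channel n W" and d: "is_dist {0..<n} P"
  shows "Ih n W P = Iin n W P"
  using Ih_eq[OF ch] d by (simp add: is_dist_def atLeast0LessThan)

lemma Iin_cong: "(\<And>x. x < n \<Longrightarrow> P x = P' x) \<Longrightarrow> Iin n W P = Iin n W P'"
  unfolding Iin_def mi_def by (intro sum.cong refl) auto

lemma Ih_cong: "(\<And>x. x < n \<Longrightarrow> P x = P' x) \<Longrightarrow> Ih n W P = Ih n W P'"
proof -
  assume h: "\<And>x. x < n \<Longrightarrow> P x = P' x"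
  have 1: "Lw n W P = Lw n W P'" unfolding Lw_def by (intro sum.cong refl) (simp add: h)
  have 2: "outp n W P = outp n W P'" unfolding outp_def by (intro ext sum.cong refl) (simp add: h)
  have 3: "(\<Sum>x<n. P x) = (\<Sum>x<n. P' x)" by (intro sum.cong refl) (simp add: h)
  show ?thesis unfolding Ih_def 1 2 3 ..
qed

lemma Ih_homog:
  assumes ch: "channel n W" and nn: "\<And>x. x < n \<Longrightarrow> 0 \<le> P x" and c: "0 \<le> c"
  shows "Ih n W (\<lambda>x. c * P x) = c * Ih n W P"
proof -
  have o: "outp n W (\<lambda>x. c * P x) y = c * outp n W P y" for y
    by (simp add: outp_def sum_distrib_left mult.assoc)
  have "En (outp n W (\<lambda>x. c * P x)) = (\<Sum>y\<in>UNIV. c * phi (outp n W P y) + outp n W P y * phi c)"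
    unfolding En_def o by (intro sum.cong refl phi_mult c outp_nn ch nn)
  also have "\<dots> = c * En (outp n W P) + (\<Sum>x<n. P x) * phi c"
    by (simp add: sum.distrib En_def sum_distrib_left sum_distrib_right[symmetric] outp_sum[OF ch])
  finally have e: "En (outp n W (\<lambda>x. c * P x)) = c * En (outp n W P) + (\<Sum>x<n. P x) * phi c" .
  have s: "phi (\<Sum>x<n. c * P x) = c * phi (\<Sum>x<n. P x) + (\<Sum>x<n. P x) * phi c"
    using phi_mult[OF c sum_nonneg[of "{..<n}" P]] nn by (simp add: sum_distrib_left[symmetric])
  show ?thesis unfolding Ih_def e s by (simp add: Lw_def sum_distrib_left algebra_simps)
qed




lemma kernel_nn: "kernel b n q \<Longrightarrow> v < b \<Longrightarrow> x < n \<Longrightarrow> 0 \<le> q v x"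
  by (auto simp: kernel_def is_dist_def)
lemma kernel_sum: "kernel b n q \<Longrightarrow> v < b \<Longrightarrow> (\<Sum>x<n. q v x) = 1"
  by (auto simp: kernel_def is_dist_def atLeast0LessThan)

lemma Lw_mix: "Lw n W (\<lambda>x. \<Sum>v<b. c v * q v x) = (\<Sum>v<b. c v * Lw n W (q v))"
  unfolding Lw_def by (simp add: sum_distrib_left sum_distrib_right mult.assoc sum.swap[of _ "{..<b}"])

lemma outp_mix: "outp n W (\<lambda>x. \<Sum>v<b. c v * q v x) y = (\<Sum>v<b. c v * outp n W (q v) y)"
  unfolding outp_def by (simp add: sum_distrib_left sum_distrib_right mult.assoc sum.swap[of _ "{..<b}"])

lemma En_kernel:
  assumes ch: "channel n W" and k: "kernel b n q" and v: "v < b"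
  shows "En (outp n W (q v)) = Lw n W (q v) - Iin n W (q v)"
  using Iin_eq[OF ch, of "q v"] kernel_nn[OF k v] by simp

lemma jointVY_eq: "jointVY n W p q v y = p v * outp n W (q v) y"
  by (simp add: jointVY_def outp_def)
lemma jointUVY_eq: "jointUVY n W puv q u v y = puv u v * outp n W (q v) y"
  by (simp add: jointUVY_def outp_def)

lemma IVY_eq:
  assumes ch: "channel n W" and pn: "\<And>v. v < b \<Longrightarrow> 0 \<le> p v" and k: "kernel b n q"
  shows "IVY n W b p q = Iin n W (\<lambda>x. \<Sum>v<b. p v * q v x) - (\<Sum>v<b. p v * Iin n W (q v))"
proof -
  define PX where "PX = (\<lambda>x. \<Sum>v<b. p v * q v x)"
  have onn: "0 \<le> outp n W (q v) y" if "v < b" for v y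
    by (rule outp_nn[OF ch]) (use kernel_nn[OF k that] in auto)
  have os: "(\<Sum>y\<in>UNIV. outp n W (q v) y) = 1" if "v < b" for v
    using outp_sum[OF ch] kernel_sum[OF k that] by simp
  have "IVY n W b p q = (\<Sum>v<b. \<Sum>y\<in>UNIV. phi (p v * outp n W (q v) y))
      - (\<Sum>v<b. phi (\<Sum>y\<in>UNIV. p v * outp n W (q v) y)) - (\<Sum>y\<in>UNIV. phi (\<Sum>v<b. p v * outp n W (q v) y))"
    unfolding IVY_def jointVY_eq atLeast0LessThan
    by (rule mi_ent) (auto intro!: mult_nonneg_nonneg pn onn)
  also have "(\<Sum>v<b. \<Sum>y\<in>UNIV. phi (p v * outp n W (q v) y)) = (\<Sum>v<b. p v * En (outp n W (q v)) + phi (p v))"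
  proof (intro sum.cong refl)
    fix v assume "v \<in> {..<b}" then have v: "v < b" by auto
    have "(\<Sum>y\<in>UNIV. phi (p v * outp n W (q v) y)) = (\<Sum>y\<in>UNIV. p v * phi (outp n W (q v) y) + outp n W (q v) y * phi (p v))"
      by (intro sum.cong refl phi_mult pn v onn)
    also have "\<dots> = p v * En (outp n W (q v)) + phi (p v)"
      by (simp add: sum.distrib En_def sum_distrib_left sum_distrib_right[symmetric] os[OF v])
    finally show "(\<Sum>y\<in>UNIV. phi (p v * outp n W (q v) y)) = p v * En (outp n W (q v)) + phi (p v)" .
  qed
  also have "(\<Sum>v<b. phi (\<Sum>y\<in>UNIV. p v * outp n W (q v) y)) = (\<Sum>v<b. phi (p v))"
    by (intro sum.cong refl) (simp add: sum_distrib_left[symmetric] os)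
  also have "(\<Sum>y\<in>UNIV. phi (\<Sum>v<b. p v * outp n W (q v) y)) = En (outp n W PX)"
    unfolding En_def PX_def outp_mix ..
  also have "(\<Sum>v<b. p v * En (outp n W (q v))) = (\<Sum>v<b. p v * Lw n W (q v)) - (\<Sum>v<b. p v * Iin n W (q v))"
    by (simp add: En_kernel[OF ch k] right_diff_distrib sum_subtractf)
  moreover have "Iin n W PX = Lw n W PX - En (outp n W PX)"
    by (rule Iin_eq[OF ch]) (auto simp: PX_def intro!: sum_nonneg mult_nonneg_nonneg pn kernel_nn[OF k])
  ultimately show ?thesis by (simp add: sum.distrib PX_def Lw_mix)
qed

lemma IVYU_eq:
  assumes ch: "channel n W" and pn: "\<And>u v. u < a \<Longrightarrow> v < b \<Longrightarrow> 0 \<le> puv u v" and k: "kernel b n q"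
  shows "IVY_U n W a b puv q = (\<Sum>u<a. Ih n W (\<lambda>x. \<Sum>v<b. puv u v * q v x))
     - (\<Sum>v<b. (\<Sum>u<a. puv u v) * Iin n W (q v))"
proof -
  have onn: "0 \<le> outp n W (q v) y" if "v < b" for v y
    by (rule outp_nn[OF ch]) (use kernel_nn[OF k that] in auto)
  have os: "(\<Sum>y\<in>UNIV. outp n W (q v) y) = 1" if "v < b" for v
    using outp_sum[OF ch] kernel_sum[OF k that] by simp
  have "IVY_U n W a b puv q = (\<Sum>u<a. \<Sum>v<b. \<Sum>y\<in>UNIV. phi (puv u v * outp n W (q v) y))
      + (\<Sum>u<a. phi (\<Sum>v<b. \<Sum>y\<in>UNIV. puv u v * outp n W (q v) y))
      - (\<Sum>u<a. \<Sum>v<b. phi (\<Sum>y\<in>UNIV. puv u v * outp n W (q v) y))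
      - (\<Sum>u<a. \<Sum>y\<in>UNIV. phi (\<Sum>v<b. puv u v * outp n W (q v) y))"
    unfolding IVY_U_def jointUVY_eq atLeast0LessThan
    by (rule cmi_ent) (auto intro!: mult_nonneg_nonneg pn onn)
  also have "(\<Sum>u<a. \<Sum>v<b. \<Sum>y\<in>UNIV. phi (puv u v * outp n W (q v) y))
      = (\<Sum>u<a. \<Sum>v<b. puv u v * En (outp n W (q v)) + phi (puv u v))"
  proof (intro sum.cong refl)
    fix u v assume "u \<in> {..<a}" "v \<in> {..<b}" then have u: "u < a" and v: "v < b" by auto
    have "(\<Sum>y\<in>UNIV. phi (puv u v * outp n W (q v) y)) = (\<Sum>y\<in>UNIV. puv u v * phi (outp n W (q v) y) + outp n W (q v) y * phi (puv u v))"
      by (intro sum.cong refl phi_mult pn u v onn)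
    also have "\<dots> = puv u v * En (outp n W (q v)) + phi (puv u v)"
      by (simp add: sum.distrib En_def sum_distrib_left sum_distrib_right[symmetric] os[OF v])
    finally show "(\<Sum>y\<in>UNIV. phi (puv u v * outp n W (q v) y)) = puv u v * En (outp n W (q v)) + phi (puv u v)" .
  qed
  also have "(\<Sum>u<a. phi (\<Sum>v<b. \<Sum>y\<in>UNIV. puv u v * outp n W (q v) y)) = (\<Sum>u<a. phi (\<Sum>v<b. puv u v))"
    by (intro sum.cong refl arg_cong[where f=phi]) (simp add: sum_distrib_left[symmetric] os)
  also have "(\<Sum>u<a. \<Sum>v<b. phi (\<Sum>y\<in>UNIV. puv u v * outp n W (q v) y)) = (\<Sum>u<a. \<Sum>v<b. phi (puv u v))"
    by (intro sum.cong refl) (simp add: sum_distrib_left[symmetric] os)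
  also have "(\<Sum>u<a. \<Sum>y\<in>UNIV. phi (\<Sum>v<b. puv u v * outp n W (q v) y))
      = (\<Sum>u<a. En (outp n W (\<lambda>x. \<Sum>v<b. puv u v * q v x)))"
    unfolding En_def outp_mix ..
  also have "(\<Sum>u<a. \<Sum>v<b. puv u v * En (outp n W (q v)) + phi (puv u v)) =
     (\<Sum>u<a. \<Sum>v<b. puv u v * Lw n W (q v)) - (\<Sum>u<a. \<Sum>v<b. puv u v * Iin n W (q v)) + (\<Sum>u<a. \<Sum>v<b. phi (puv u v))"
    by (simp add: En_kernel[OF ch k] right_diff_distrib sum_subtractf sum.distrib)
  also have "(\<Sum>u<a. \<Sum>v<b. puv u v * Iin n W (q v)) = (\<Sum>v<b. (\<Sum>u<a. puv u v) * Iin n W (q v))"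
    by (subst sum.swap) (simp add: sum_distrib_right)
  also have "(\<Sum>u<a. \<Sum>v<b. puv u v * Lw n W (q v)) = (\<Sum>u<a. Lw n W (\<lambda>x. \<Sum>v<b. puv u v * q v x))"
    by (simp add: Lw_mix)
  moreover have "(\<Sum>x<n. \<Sum>v<b. puv u v * q v x) = (\<Sum>v<b. puv u v)" for u
    by (subst sum.swap) (simp add: sum_distrib_left[symmetric] kernel_sum[OF k])
  ultimately show ?thesis by (simp add: Ih_def sum.distrib sum_subtractf)
qed




lemma phi_tangent:
  assumes a: "0 \<le> a" and t: "0 < t"
  shows "a * log 2 t + (a - t) / ln 2 \<le> phi a"
proof (cases "a = 0")
  case True then show ?thesis using t by simp
next
  case False
  then have a0: "0 < a" using a by auto
  have "ln (t / a) \<le> t / a - 1" by (rule ln_le_minus_one) (use a0 t in simp)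
  then have "1 - t / a \<le> ln (a / t)" using a0 t by (simp add: ln_div)
  then have "a * (1 - t / a) \<le> a * ln (a / t)" using a0 by (simp add: mult_left_mono)
  then have "a - t \<le> a * (ln a - ln t)" using a0 t by (simp add: ln_div right_diff_distrib)
  then have "(a - t) / ln 2 \<le> a * (ln a - ln t) / ln 2" by (simp add: divide_right_mono)
  then show ?thesis by (simp add: phi_def log_def diff_divide_distrib right_diff_distrib)
qed

lemma phi_jensen:
  assumes fK: "finite K" and l: "\<And>k. k \<in> K \<Longrightarrow> 0 \<le> l k" and a: "\<And>k. k \<in> K \<Longrightarrow> 0 \<le> a k"
    and s: "sum l K = 1"
  shows "phi (\<Sum>k\<in>K. l k * a k) \<le> (\<Sum>k\<in>K. l k * phi (a k))"
proof -
  define t where "t = (\<Sum>k\<in>K. l k * a k)"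
  have tnn: "0 \<le> t" unfolding t_def by (intro sum_nonneg mult_nonneg_nonneg l a)
  show ?thesis
  proof (cases "t = 0")
    case True
    then have "\<forall>k\<in>K. l k * a k = 0" unfolding t_def
      by (subst sum_nonneg_eq_0_iff[symmetric]) (auto intro: mult_nonneg_nonneg l a fK)
    then have "(\<Sum>k\<in>K. l k * phi (a k)) = 0" by (intro sum.neutral) (auto simp: phi_def)
    then show ?thesis using True t_def by simp
  next
    case False
    with tnn have t0: "0 < t" by auto
    have "(\<Sum>k\<in>K. l k * (a k * log 2 t + (a k - t) / ln 2)) \<le> (\<Sum>k\<in>K. l k * phi (a k))"
      by (intro sum_mono mult_left_mono phi_tangent a t0 l)
    moreover have "(\<Sum>k\<in>K. l k * (a k * log 2 t + (a k - t) / ln 2)) = phi t"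
    proof -
      have e: "l k * (a k * log 2 t + (a k - t) / ln 2) = (l k * a k) * log 2 t + (l k * a k) / ln 2 - t * l k / ln 2" for k
        by (simp add: field_simps)
      have "(\<Sum>k\<in>K. l k * (a k * log 2 t + (a k - t) / ln 2)) = t * log 2 t + t / ln 2 - t * sum l K / ln 2"
        unfolding e by (simp add: sum.distrib sum_subtractf sum_distrib_right[symmetric] sum_divide_distrib[symmetric]
            sum_distrib_left[symmetric] t_def)
      then show ?thesis using s by (simp add: phi_def)
    qed
    ultimately show ?thesis by (simp add: t_def)
  qed
qed

lemma shift_inj: "inj_on (\<lambda>k. (x + k) mod n) {..<(n::nat)}"
proof (rule inj_onI)
  fix k k' assume k: "k \<in> {..<n}" and k': "k' \<in> {..<n}" and e: "(x + k) mod n = (x + k') mod n"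
  have dv: "k' - k = 0" if "k \<le> k'" "k' < n" "(x + k) mod n = (x + k') mod n" for k k'
  proof -
    have "n dvd (x + k') - (x + k)" using that by (metis add_le_cancel_left mod_eq_dvd_iff_nat)
    then have "n dvd k' - k" by simp
    moreover have "k' - k < n" using that by simp
    ultimately show ?thesis using dvd_imp_le by fastforce
  qed
  show "k = k'"
  proof (cases "k \<le> k'")
    case True then show ?thesis using dv[OF True] k' e by simp
  next
    case False then show ?thesis using dv[of k' k] k e by simp
  qed
qed

lemma shift_sum: "(\<Sum>k<n. P ((x + k) mod n)) = (\<Sum>j<(n::nat). P j)"
proof -
  have im: "(\<lambda>k. (x + k) mod n) ` {..<n} = {..<n}"
  proof (cases "n = 0")
    case True then show ?thesis by simp
  next
    case False
    show ?thesis
      by (rule endo_inj_surj) (use shift_inj False in auto)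
  qed
  show ?thesis
    using sum.reindex[OF shift_inj, of P x n] im by (simp add: comp_def)
qed

lemma Iin_le_unif:
  assumes ch: "channel n W" and css: "cyclic_shift_symmetric n W" and n: "0 < n"
    and d: "is_dist {0..<n} P"
  shows "Iin n W P \<le> Iin n W (uniform_in n)"
proof -
  define Pk where "Pk k = (\<lambda>x. P ((x + k) mod n))" for k
  define avg where "avg = (\<lambda>x. \<Sum>k<n. (1 / real n) * Pk k x)"
  have Pnn: "0 \<le> P x" if "x < n" for x using d that by (auto simp: is_dist_def)
  have Pknn: "0 \<le> Pk k x" for k x unfolding Pk_def by (rule Pnn) (use n in simp)
  have avgnn: "0 \<le> avg x" for x unfolding avg_def by (intro sum_nonneg mult_nonneg_nonneg Pknn) auto
  have sumP: "(\<Sum>j<n. P j) = 1" using d by (simp add: is_dist_def atLeast0LessThan)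
  have avg_u: "avg x = uniform_in n x" if "x < n" for x
    unfolding avg_def Pk_def uniform_in_def by (simp add: sum_divide_distrib[symmetric] shift_sum sumP)
  have IPk: "Iin n W (Pk k) = Iin n W P" for k
    using css d unfolding cyclic_shift_symmetric_def Pk_def by blast
  have "En (outp n W avg) = (\<Sum>y\<in>UNIV. phi (\<Sum>k<n. (1 / real n) * outp n W (Pk k) y))"
    unfolding En_def avg_def outp_mix ..
  also have "\<dots> \<le> (\<Sum>y\<in>UNIV. \<Sum>k<n. (1 / real n) * phi (outp n W (Pk k) y))"
    by (intro sum_mono phi_jensen) (use n in \<open>auto intro!: outp_nn[OF ch] Pknn\<close>)
  also have "\<dots> = (\<Sum>k<n. (1 / real n) * En (outp n W (Pk k)))"
    by (subst sum.swap) (simp add: En_def sum_distrib_left)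
  finally have eE: "En (outp n W avg) \<le> (\<Sum>k<n. (1 / real n) * En (outp n W (Pk k)))" .
  have "Iin n W P = (\<Sum>k<n. (1 / real n) * Iin n W (Pk k))"
    using n by (simp add: IPk)
  also have "\<dots> = (\<Sum>k<n. (1 / real n) * Lw n W (Pk k)) - (\<Sum>k<n. (1 / real n) * En (outp n W (Pk k)))"
    by (simp add: Iin_eq[OF ch Pknn] right_diff_distrib sum_subtractf)
  also have "(\<Sum>k<n. (1 / real n) * Lw n W (Pk k)) = Lw n W avg"
    unfolding avg_def Lw_mix ..
  also have "Lw n W avg - (\<Sum>k<n. (1 / real n) * En (outp n W (Pk k))) \<le> Lw n W avg - En (outp n W avg)"
    using eE by simp
  also have "\<dots> = Iin n W avg" by (rule Iin_eq[OF ch avgnn, symmetric])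
  also have "\<dots> = Iin n W (uniform_in n)" by (rule Iin_cong) (rule avg_u)
  finally show ?thesis .
qed




lemma isCont_phi: "0 < x \<Longrightarrow> isCont phi x"
  unfolding phi_def by (auto intro!: continuous_intros)

lemma phi_cont: "continuous_on {0..1} phi"
proof (rule continuous_on_IccI)
  show "(phi \<longlongrightarrow> phi 0) (at_right 0)" unfolding phi_def by simp real_asymp
  show "(phi \<longlongrightarrow> phi 1) (at_left 1)"
    using isCont_phi[of 1] by (simp add: isCont_def tendsto_mono[OF at_within_le_at])
  show "phi \<midarrow>x\<rightarrow> phi x" if "0 < x" "x < 1" for x
    using isCont_phi[of x] that by (simp add: isCont_def)
qed simp

lemma coord_cont: "continuous_on T (\<lambda>P. P i :: 'b::topological_space)"
  by (rule continuous_on_subset[OF continuous_on_product_coordinates]) simp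

lemma outp_le1:
  assumes ch: "channel n W" and nn: "\<And>x. x < n \<Longrightarrow> 0 \<le> P x" and s: "(\<Sum>x<n. P x) = 1"
  shows "outp n W P y \<le> 1"
proof -
  have "W x y \<le> 1" if "x < n" for x
  proof -
    have "W x y \<le> (\<Sum>y\<in>UNIV. W x y)" by (rule member_le_sum) (auto intro: chW_nn[OF ch that])
    then show ?thesis using chW_sum[OF ch that] by simp
  qed
  then have "outp n W P y \<le> (\<Sum>x<n. P x * 1)" unfolding outp_def
    by (intro sum_mono mult_left_mono) (auto intro: nn)
  then show ?thesis using s by simp
qed

lemma cont_IW:
  assumes ch: "channel n W"
  defines "S \<equiv> {P::nat\<Rightarrow>real. (\<forall>x. P x \<in> (if x < n then {0..1} else {0})) \<and> sum P {..<n} = 1}"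
  shows "continuous_on S (\<lambda>P. Lw n W P - En (outp n W P))"
proof -
  have c1: "continuous_on S (\<lambda>P. outp n W P y)" for y
    unfolding outp_def by (intro continuous_intros coord_cont)
  have "continuous_on S (\<lambda>P. phi (outp n W P y))" for y
  proof (rule continuous_on_compose2[OF phi_cont c1])
    show "(\<lambda>P. outp n W P y) ` S \<subseteq> {0..1}"
    proof
      fix r assume "r \<in> (\<lambda>P. outp n W P y) ` S"
      then obtain P where P: "P \<in> S" and r: "r = outp n W P y" by auto
      have nn: "0 \<le> P x" if "x < n" for x
      proof -
        have "P x \<in> (if x < n then {0..1} else {0})" using P unfolding S_def by blast
        then show ?thesis using that by simp
      qed
      have s: "(\<Sum>x<n. P x) = 1" using P unfolding S_def by simp
      show "r \<in> {0..1}" using r outp_nn[OF ch nn] outp_le1[OF ch nn s] by auto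
    qed
  qed
  then show ?thesis unfolding Lw_def En_def
    by (intro continuous_intros coord_cont) auto
qed

lemma exists_min:
  fixes W :: "nat \<Rightarrow> 'y::finite \<Rightarrow> real" and Q :: "nat \<Rightarrow> 'z::finite \<Rightarrow> real"
  assumes chW: "channel n W" and chQ: "channel n Q" and n: "0 < n"
  shows "\<exists>P0. is_dist {0..<n} P0 \<and> (\<forall>P. is_dist {0..<n} P \<longrightarrow>
     c1 * Iin n W P0 + c2 * Iin n Q P0 \<le> c1 * Iin n W P + c2 * Iin n Q P)"
proof -
  define F where "F x = (if x < n then {0..1} else {0::real})" for x
  define S where "S = {P::nat\<Rightarrow>real. (\<forall>x. P x \<in> (if x < n then {0..1} else {0})) \<and> sum P {..<n} = 1}"
  define h where "h P = c1 * (Lw n W P - En (outp n W P)) + c2 * (Lw n Q P - En (outp n Q P))" for P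
  have S_eq: "S = Pi UNIV F \<inter> {P. sum P {..<n} = 1}" unfolding S_def F_def Pi_iff by (auto split: if_splits)
  have "compactin (product_topology (\<lambda>_. euclidean) UNIV) (PiE UNIV F)"
    by (subst compactin_PiE) (auto simp: F_def)
  then have "compact (Pi UNIV F)" by (simp add: euclidean_product_topology PiE_UNIV_domain)
  moreover have "closed {P::nat\<Rightarrow>real. sum P {..<n} = 1}"
  proof -
    have "continuous_on UNIV (\<lambda>P::nat\<Rightarrow>real. \<Sum>x<n. P x)"
      by (intro continuous_intros coord_cont)
    then show ?thesis using closed_Collect_eq[of "\<lambda>P::nat\<Rightarrow>real. \<Sum>x<n. P x" "\<lambda>_. 1"] by simp
  qed
  ultimately have cS: "compact S" unfolding S_eq by (rule compact_Int_closed)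
  have dS: "is_dist {0..<n} P" if "P \<in> S" for P
  proof -
    have "P x \<in> (if x < n then {0..1} else {0})" for x using that unfolding S_def by blast
    then have "\<forall>x\<in>{..<n}. 0 \<le> P x" by (metis atLeastAtMost_iff lessThan_iff)
    moreover have "sum P {..<n} = 1" using that unfolding S_def by blast
    ultimately show ?thesis unfolding is_dist_def atLeast0LessThan by blast
  qed
  have nnS: "0 \<le> P x" if "P \<in> S" "x < n" for P x
    using dS[OF that(1)] that(2) by (simp add: is_dist_def)
  have hS: "h P = c1 * Iin n W P + c2 * Iin n Q P" if "P \<in> S" for P
    unfolding h_def using Iin_eq[OF chW nnS[OF that]] Iin_eq[OF chQ nnS[OF that]] by simp
  have "uniform_in n \<in> S \<or> (\<lambda>x. if x < n then 1 / real n else 0) \<in> S"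
    using n by (auto simp: S_def)
  then have ne: "S \<noteq> {}" by auto
  have ch: "continuous_on S h" unfolding h_def S_def
    by (intro continuous_intros cont_IW[OF chW, unfolded Ball_def] cont_IW[OF chQ])
  obtain P0 where P0: "P0 \<in> S" and min: "\<And>P. P \<in> S \<Longrightarrow> h P0 \<le> h P"
    using continuous_attains_inf[OF cS ne ch] by blast
  show ?thesis
  proof (intro exI conjI allI impI)
    show "is_dist {0..<n} P0" by (rule dS[OF P0])
    fix P assume d: "is_dist {0..<n} P"
    define P' where "P' x = (if x < n then P x else 0)" for x
    have Pnn: "\<forall>x\<in>{..<n}. 0 \<le> P x" and Ps: "sum P {..<n} = 1"
      using d unfolding is_dist_def atLeast0LessThan by auto
    have "P x \<le> 1" if "x < n" for x
    proof -
      have "P x \<le> sum P {..<n}" by (rule member_le_sum) (use Pnn that in auto)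
      then show ?thesis using Ps by simp
    qed
    moreover have "sum P' {..<n} = 1" using Ps unfolding P'_def by simp
    ultimately have "P' \<in> S" using Pnn unfolding S_def P'_def by auto
    have "Iin n W P' = Iin n W P" "Iin n Q P' = Iin n Q P" by (auto intro: Iin_cong simp: P'_def)
    then show "c1 * Iin n W P0 + c2 * Iin n Q P0 \<le> c1 * Iin n W P + c2 * Iin n Q P"
      using min[OF \<open>P' \<in> S\<close>] hS[OF P0] hS[OF \<open>P' \<in> S\<close>] by simp
  qed
qed



lemma sum_lin: "(\<Sum>v\<in>B. c v * (m * X v - Y v)) = m * (\<Sum>v\<in>B. c v * X v) - (\<Sum>v\<in>B. c v * Y v)"
  for c X Y :: "'a \<Rightarrow> real"
  by (simp add: sum_subtractf sum_distrib_left algebra_simps)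

lemma Ih_diff_le:
  fixes W :: "nat \<Rightarrow> 'y::finite \<Rightarrow> real" and Q :: "nat \<Rightarrow> 'z::finite \<Rightarrow> real"
  assumes chW: "channel n W" and chQ: "channel n Q" and dc: "dominantly_cyclic_shift_symmetric n W Q"
    and nn: "\<And>x. x < n \<Longrightarrow> 0 \<le> P x"
  shows "Ih n W P - Ih n Q P \<le> (\<Sum>x<n. P x) * fsec n W Q (uniform_in n)"
proof -
  define s where "s = (\<Sum>x<n. P x)"
  have s0: "0 \<le> s" unfolding s_def by (intro sum_nonneg nn) auto
  show ?thesis
  proof (cases "s = 0")
    case True
    then have z: "P x = 0" if "x < n" for x
      using sum_nonneg_eq_0_iff[of "{..<n}" P] nn that unfolding s_def by auto
    have "Ih n W P = Ih n W (\<lambda>x. 0 * P x)" "Ih n Q P = Ih n Q (\<lambda>x. 0 * P x)"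
      by (auto intro!: Ih_cong simp: z)
    then show ?thesis using Ih_homog[where P=P and c=0, OF chW nn] Ih_homog[where P=P and c=0, OF chQ nn] True s_def by simp
  next
    case False
    with s0 have sp: "0 < s" by auto
    define P' where "P' x = P x / s" for x
    have nn': "0 \<le> P' x" if "x < n" for x unfolding P'_def using nn[OF that] sp by simp
    have d: "is_dist {0..<n} P'"
      unfolding is_dist_def atLeast0LessThan P'_def using nn sp
      by (simp add: sum_divide_distrib[symmetric] s_def[symmetric])
    have e: "P x = s * P' x" for x unfolding P'_def using sp by simp
    have eP: "P = (\<lambda>x. s * P' x)" by (rule ext) (rule e)
    have h1: "Ih n W (\<lambda>x. s * P' x) = s * Ih n W P'" by (rule Ih_homog[where P=P', OF chW nn' s0])
    have h2: "Ih n Q (\<lambda>x. s * P' x) = s * Ih n Q P'" by (rule Ih_homog[where P=P', OF chQ nn' s0])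
    have "Ih n W P = s * Ih n W P'" "Ih n Q P = s * Ih n Q P'"
      using h1 h2 eP by simp_all
    moreover have "fsec n W Q P' \<le> fsec n W Q (uniform_in n)"
      using dc d unfolding dominantly_cyclic_shift_symmetric_def by blast
    ultimately have "Ih n W P - Ih n Q P = s * fsec n W Q P'"
      by (simp add: Ih_dist[OF chW d] Ih_dist[OF chQ d] fsec_def right_diff_distrib)
    also have "\<dots> \<le> s * fsec n W Q (uniform_in n)"
      using \<open>fsec n W Q P' \<le> _\<close> s0 by (rule mult_left_mono)
    finally show ?thesis by (simp add: s_def)
  qed
qed

lemma rs_value:
  fixes W :: "nat \<Rightarrow> 'y::finite \<Rightarrow> real" and Q :: "nat \<Rightarrow> 'z::finite \<Rightarrow> real"
  assumes chW: "channel n W" and chQ: "channel n Q" and d2: "is_dist2 a b puv" and k: "kernel b n q"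
  shows "\<mu> * IVY n W b (\<lambda>v. \<Sum>u<a. puv u v) q + IVY_U n W a b puv q - IVY_U n Q a b puv q
    = \<mu> * Iin n W (\<lambda>x. \<Sum>v<b. (\<Sum>u<a. puv u v) * q v x)
      + (\<Sum>u<a. Ih n W (\<lambda>x. \<Sum>v<b. puv u v * q v x) - Ih n Q (\<lambda>x. \<Sum>v<b. puv u v * q v x))
      - (\<Sum>v<b. (\<Sum>u<a. puv u v) * ((\<mu> + 1) * Iin n W (q v) - Iin n Q (q v)))"
proof -
  have pn: "\<And>u v. u < a \<Longrightarrow> v < b \<Longrightarrow> 0 \<le> puv u v" using d2 by (simp add: is_dist2_def)
  have pv: "0 \<le> (\<Sum>u<a. puv u v)" if "v < b" for v by (intro sum_nonneg) (auto intro: pn that)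
  have s: "(\<Sum>v<b. (\<Sum>u<a. puv u v) * ((\<mu> + 1) * Iin n W (q v) - Iin n Q (q v)))
     = (\<mu> + 1) * (\<Sum>v<b. (\<Sum>u<a. puv u v) * Iin n W (q v)) - (\<Sum>v<b. (\<Sum>u<a. puv u v) * Iin n Q (q v))"
    by (rule sum_lin)
  have 1: "IVY n W b (\<lambda>v. \<Sum>u<a. puv u v) q = Iin n W (\<lambda>x. \<Sum>v<b. (\<Sum>u<a. puv u v) * q v x) - (\<Sum>v<b. (\<Sum>u<a. puv u v) * Iin n W (q v))"
    by (rule IVY_eq) (auto intro: chW pv k)
  have 2: "IVY_U n W a b puv q = (\<Sum>u<a. Ih n W (\<lambda>x. \<Sum>v<b. puv u v * q v x)) - (\<Sum>v<b. (\<Sum>u<a. puv u v) * Iin n W (q v))"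
    by (rule IVYU_eq) (auto intro: chW pn k)
  have 3: "IVY_U n Q a b puv q = (\<Sum>u<a. Ih n Q (\<lambda>x. \<Sum>v<b. puv u v * q v x)) - (\<Sum>v<b. (\<Sum>u<a. puv u v) * Iin n Q (q v))"
    by (rule IVYU_eq) (auto intro: chQ pn k)
  have 4: "(\<Sum>u<a. Ih n W (\<lambda>x. \<Sum>v<b. puv u v * q v x) - Ih n Q (\<lambda>x. \<Sum>v<b. puv u v * q v x))
     = (\<Sum>u<a. Ih n W (\<lambda>x. \<Sum>v<b. puv u v * q v x)) - (\<Sum>u<a. Ih n Q (\<lambda>x. \<Sum>v<b. puv u v * q v x))"
    by (rule sum_subtractf)
  show ?thesis unfolding 1 2 3 4 s by (simp add: right_diff_distrib distrib_right)
qed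

lemma pf_value:
  fixes W :: "nat \<Rightarrow> 'y::finite \<Rightarrow> real" and Q :: "nat \<Rightarrow> 'z::finite \<Rightarrow> real"
  assumes chW: "channel n W" and chQ: "channel n Q" and pn: "\<And>v. v < b \<Longrightarrow> 0 \<le> p v" and k: "kernel b n q"
  shows "(\<mu> + 1) * IVY n W b p q - IVY n Q b p q
    = \<mu> * Iin n W (\<lambda>x. \<Sum>v<b. p v * q v x) + fsec n W Q (\<lambda>x. \<Sum>v<b. p v * q v x)
      - (\<Sum>v<b. p v * ((\<mu> + 1) * Iin n W (q v) - Iin n Q (q v)))"
proof -
  have s: "(\<Sum>v<b. p v * ((\<mu> + 1) * Iin n W (q v) - Iin n Q (q v)))
     = (\<mu> + 1) * (\<Sum>v<b. p v * Iin n W (q v)) - (\<Sum>v<b. p v * Iin n Q (q v))"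
    by (rule sum_lin)
  have 1: "IVY n W b p q = Iin n W (\<lambda>x. \<Sum>v<b. p v * q v x) - (\<Sum>v<b. p v * Iin n W (q v))"
    by (rule IVY_eq) (auto intro: chW pn k)
  have 2: "IVY n Q b p q = Iin n Q (\<lambda>x. \<Sum>v<b. p v * q v x) - (\<Sum>v<b. p v * Iin n Q (q v))"
    by (rule IVY_eq) (auto intro: chQ pn k)
  show ?thesis unfolding 1 2 s fsec_def by (simp add: right_diff_distrib distrib_right)
qed

lemma sc_value:
  fixes W :: "nat \<Rightarrow> 'y::finite \<Rightarrow> real" and Q :: "nat \<Rightarrow> 'z::finite \<Rightarrow> real"
  assumes chW: "channel n W" and chQ: "channel n Q" and pn: "\<And>v. v < b \<Longrightarrow> 0 \<le> p v" and k: "kernel b n q"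
  shows "IVY n W b p q - IVY n Q b p q
    = fsec n W Q (\<lambda>x. \<Sum>v<b. p v * q v x) - (\<Sum>v<b. p v * fsec n W Q (q v))"
proof -
  have 1: "IVY n W b p q = Iin n W (\<lambda>x. \<Sum>v<b. p v * q v x) - (\<Sum>v<b. p v * Iin n W (q v))"
    by (rule IVY_eq) (auto intro: chW pn k)
  have 2: "IVY n Q b p q = Iin n Q (\<lambda>x. \<Sum>v<b. p v * q v x) - (\<Sum>v<b. p v * Iin n Q (q v))"
    by (rule IVY_eq) (auto intro: chQ pn k)
  show ?thesis unfolding 1 2 fsec_def by (simp add: sum_subtractf right_diff_distrib)
qed




lemma mix_dist:
  assumes pn: "\<And>v. v < b \<Longrightarrow> 0 \<le> p v" and ps: "(\<Sum>v<b. p v) = 1" and k: "kernel b n q"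
  shows "is_dist {0..<n} (\<lambda>x. \<Sum>v<b. p v * q v x)"
  unfolding is_dist_def atLeast0LessThan
proof
  show "\<forall>x\<in>{..<n}. 0 \<le> (\<Sum>v<b. p v * q v x)"
    by (auto intro!: sum_nonneg mult_nonneg_nonneg pn kernel_nn[OF k])
  have "(\<Sum>x<n. \<Sum>v<b. p v * q v x) = (\<Sum>v<b. p v * (\<Sum>x<n. q v x))"
    by (subst sum.swap) (simp add: sum_distrib_left)
  also have "\<dots> = (\<Sum>v<b. p v)" by (intro sum.cong refl) (simp add: kernel_sum[OF k])
  finally show "(\<Sum>x<n. \<Sum>v<b. p v * q v x) = 1" using ps by simp
qed

lemma mix_bound:
  fixes p :: "nat \<Rightarrow> real" and m :: real
  assumes pn: "\<And>v. v < b \<Longrightarrow> 0 \<le> p v" and k: "kernel b n q"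
    and m: "\<And>P. is_dist {0..<n} P \<Longrightarrow> m \<le> G P"
  shows "(\<Sum>v<b. p v) * m \<le> (\<Sum>v<b. p v * G (q v))"
proof -
  have "(\<Sum>v<b. p v) * m = (\<Sum>v<b. p v * m)" by (simp add: sum_distrib_right)
  also have "\<dots> \<le> (\<Sum>v<b. p v * G (q v))"
    by (intro sum_mono mult_left_mono m pn) (use k in \<open>auto simp: kernel_def\<close>)
  finally show ?thesis .
qed

lemma shift_kernel:
  assumes n: "0 < n" and d: "is_dist {0..<n} Ps"
  shows "kernel n n (\<lambda>v x. Ps ((x + v) mod n))"
    and "\<And>x. x < n \<Longrightarrow> (\<Sum>v<n. (1 / real n) * Ps ((x + v) mod n)) = uniform_in n x"
proof -
  have sumP: "(\<Sum>j<n. Ps j) = 1" using d by (simp add: is_dist_def atLeast0LessThan)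
  have nn: "0 \<le> Ps j" if "j < n" for j using d that by (auto simp: is_dist_def)
  show "kernel n n (\<lambda>v x. Ps ((x + v) mod n))"
    unfolding kernel_def is_dist_def atLeast0LessThan
  proof (intro allI impI conjI ballI)
    fix v x assume "v < n" "x \<in> {..<n}"
    show "0 \<le> Ps ((x + v) mod n)" by (rule nn) (use n in simp)
  next
    fix v assume "v < n"
    have "(\<Sum>x<n. Ps ((x + v) mod n)) = (\<Sum>x<n. Ps ((v + x) mod n))" by (simp add: add.commute)
    then show "(\<Sum>x<n. Ps ((x + v) mod n)) = 1" by (simp add: shift_sum sumP)
  qed
  show "(\<Sum>v<n. (1 / real n) * Ps ((x + v) mod n)) = uniform_in n x" if "x < n" for x
    unfolding uniform_in_def by (simp add: sum_divide_distrib[symmetric] shift_sum sumP)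
qed

lemma shift_val:
  assumes "cyclic_shift_symmetric n W" "is_dist {0..<n} Ps"
  shows "Iin n W (\<lambda>x. Ps ((x + v) mod n)) = Iin n W Ps"
  using assms unfolding cyclic_shift_symmetric_def by blast

lemma unif_dist: "0 < n \<Longrightarrow> is_dist {0..<n} (uniform_in n)"
  by (simp add: is_dist_def uniform_in_def)

theorem corollary1:
  fixes n :: nat
    and W :: "nat \<Rightarrow> 'y::finite \<Rightarrow> real"
    and Q :: "nat \<Rightarrow> 'z::finite \<Rightarrow> real"
  assumes n_pos: "0 < n"
    and chW: "channel n W" and chQ: "channel n Q"
    and dcss: "dominantly_cyclic_shift_symmetric n W Q"
  shows "(\<forall>\<mu>::real. 0 \<le> \<mu> \<longrightarrow>
           (\<exists>m \<in> prefix_values n W Q \<mu>. (\<forall>t \<in> prefix_values n W Q \<mu>. t \<le> m) \<and>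
              bdd_above (rate_split_values n W Q \<mu>) \<and> Sup (rate_split_values n W Q \<mu>) = m))
       \<and> (\<exists>P1 P2. is_dist {0..<n} P1 \<and> is_dist {0..<n} P2 \<and>
              (\<forall>P. is_dist {0..<n} P \<longrightarrow> fsec n W Q P2 \<le> fsec n W Q P \<and> fsec n W Q P \<le> fsec n W Q P1) \<and>
              secrecy_capacity n W Q = fsec n W Q P1 - fsec n W Q P2)"
proof -
  have cssW: "cyclic_shift_symmetric n W" and cssQ: "cyclic_shift_symmetric n Q"
    and fmax: "\<And>P. is_dist {0..<n} P \<Longrightarrow> fsec n W Q P \<le> fsec n W Q (uniform_in n)"
    using dcss unfolding dominantly_cyclic_shift_symmetric_def by auto
  define CW where "CW = Iin n W (uniform_in n)"
  define Fv where "Fv = fsec n W Q (uniform_in n)"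
  have ud: "is_dist {0..<n} (uniform_in n)" by (rule unif_dist[OF n_pos])
  have IWle: "Iin n W P \<le> CW" if "is_dist {0..<n} P" for P
    unfolding CW_def by (rule Iin_le_unif[OF chW cssW n_pos that])
  have nsum: "(\<Sum>v<n. (1 / real n) * c) = c" for c using n_pos by simp
  have part1: "\<exists>m \<in> prefix_values n W Q \<mu>. (\<forall>t \<in> prefix_values n W Q \<mu>. t \<le> m) \<and>
              bdd_above (rate_split_values n W Q \<mu>) \<and> Sup (rate_split_values n W Q \<mu>) = m"
    if mu: "0 \<le> \<mu>" for \<mu>
  proof -
    define G where "G P = (\<mu> + 1) * Iin n W P - Iin n Q P" for P
    obtain Pg where Pg: "is_dist {0..<n} Pg" and
      Pgmin: "\<And>P. is_dist {0..<n} P \<Longrightarrow> (\<mu> + 1) * Iin n W Pg + (-1) * Iin n Q Pg \<le> (\<mu> + 1) * Iin n W P + (-1) * Iin n Q P"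
      using exists_min[OF chW chQ n_pos, of "\<mu> + 1" "-1"] by blast
    define gmin where "gmin = G Pg"
    have gm: "gmin \<le> G P" if "is_dist {0..<n} P" for P
      using Pgmin[OF that] unfolding gmin_def G_def by simp
    define B where "B = \<mu> * CW + Fv - gmin"
    define q where "q = (\<lambda>v x. Pg ((x + v) mod n))"
    have kq: "kernel n n q" unfolding q_def by (rule shift_kernel(1)[OF n_pos Pg])
    have qu: "(\<Sum>v<n. (1 / real n) * q v x) = uniform_in n x" if "x < n" for x
      unfolding q_def by (rule shift_kernel(2)[OF n_pos Pg that])
    have Gq: "G (q v) = gmin" for v
      unfolding q_def G_def gmin_def shift_val[OF cssW Pg] shift_val[OF cssQ Pg] ..
    have pfB: "(\<mu> + 1) * IVY n W n (\<lambda>v. 1 / real n) q - IVY n Q n (\<lambda>v. 1 / real n) q = B"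
    proof -
      have "(\<mu> + 1) * IVY n W n (\<lambda>v. 1 / real n) q - IVY n Q n (\<lambda>v. 1 / real n) q
        = \<mu> * Iin n W (\<lambda>x. \<Sum>v<n. 1 / real n * q v x) + fsec n W Q (\<lambda>x. \<Sum>v<n. 1 / real n * q v x)
          - (\<Sum>v<n. 1 / real n * G (q v))"
        unfolding G_def by (rule pf_value[OF chW chQ _ kq]) simp
      also have "Iin n W (\<lambda>x. \<Sum>v<n. 1 / real n * q v x) = CW"
        unfolding CW_def by (rule Iin_cong) (rule qu)
      also have "fsec n W Q (\<lambda>x. \<Sum>v<n. 1 / real n * q v x) = Fv"
        unfolding Fv_def fsec_def using qu by (metis (no_types, lifting) Iin_cong)
      finally show ?thesis unfolding Gq nsum B_def .
    qed
    have inpf: "B \<in> prefix_values n W Q \<mu>"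
      unfolding prefix_values_def
      by (rule CollectI, rule exI[of _ n], rule exI[of _ "\<lambda>v. 1 / real n"], rule exI[of _ q])
         (use pfB kq unif_dist[OF n_pos] in \<open>simp add: uniform_in_def\<close>)
    have pfle: "t \<le> B" if tin: "t \<in> prefix_values n W Q \<mu>" for t
    proof -
      obtain b p q' where t: "t = (\<mu> + 1) * IVY n W b p q' - IVY n Q b p q'"
        and dp: "is_dist {0..<b} p" and k: "kernel b n q'"
        using tin unfolding prefix_values_def by blast
      have pn: "\<And>v. v < b \<Longrightarrow> 0 \<le> p v" and ps: "(\<Sum>v<b. p v) = 1"
        using dp by (auto simp: is_dist_def atLeast0LessThan)
      have dX: "is_dist {0..<n} (\<lambda>x. \<Sum>v<b. p v * q' v x)" by (rule mix_dist[OF pn ps k])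
      have "t = \<mu> * Iin n W (\<lambda>x. \<Sum>v<b. p v * q' v x) + fsec n W Q (\<lambda>x. \<Sum>v<b. p v * q' v x)
          - (\<Sum>v<b. p v * G (q' v))"
        unfolding t G_def by (rule pf_value[OF chW chQ pn k])
      moreover have "\<mu> * Iin n W (\<lambda>x. \<Sum>v<b. p v * q' v x) \<le> \<mu> * CW"
        by (rule mult_left_mono[OF IWle[OF dX] mu])
      moreover have "fsec n W Q (\<lambda>x. \<Sum>v<b. p v * q' v x) \<le> Fv" unfolding Fv_def by (rule fmax[OF dX])
      moreover have "(\<Sum>v<b. p v) * gmin \<le> (\<Sum>v<b. p v * G (q' v))" by (rule mix_bound[OF pn k gm])
      ultimately show ?thesis using ps unfolding B_def by simp
    qed
    have rsle: "t \<le> B" if tin: "t \<in> rate_split_values n W Q \<mu>" for t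
    proof -
      obtain a b puv q' where t: "t = \<mu> * IVY n W b (\<lambda>v. \<Sum>u<a. puv u v) q' + IVY_U n W a b puv q' - IVY_U n Q a b puv q'"
        and d2: "is_dist2 a b puv" and k: "kernel b n q'"
        using tin unfolding rate_split_values_def by blast
      have pn: "\<And>u v. u < a \<Longrightarrow> v < b \<Longrightarrow> 0 \<le> puv u v" and ps: "(\<Sum>u<a. \<Sum>v<b. puv u v) = 1"
        using d2 by (auto simp: is_dist2_def)
      have pvn: "\<And>v. v < b \<Longrightarrow> 0 \<le> (\<Sum>u<a. puv u v)" by (intro sum_nonneg) (auto intro: pn)
      have pvs: "(\<Sum>v<b. \<Sum>u<a. puv u v) = 1" using ps by (subst sum.swap)
      have dX: "is_dist {0..<n} (\<lambda>x. \<Sum>v<b. (\<Sum>u<a. puv u v) * q' v x)" by (rule mix_dist[OF pvn pvs k])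
      have "t = \<mu> * Iin n W (\<lambda>x. \<Sum>v<b. (\<Sum>u<a. puv u v) * q' v x)
          + (\<Sum>u<a. Ih n W (\<lambda>x. \<Sum>v<b. puv u v * q' v x) - Ih n Q (\<lambda>x. \<Sum>v<b. puv u v * q' v x))
          - (\<Sum>v<b. (\<Sum>u<a. puv u v) * G (q' v))"
        unfolding t G_def by (rule rs_value[OF chW chQ d2 k])
      moreover have "\<mu> * Iin n W (\<lambda>x. \<Sum>v<b. (\<Sum>u<a. puv u v) * q' v x) \<le> \<mu> * CW"
        by (rule mult_left_mono[OF IWle[OF dX] mu])
      moreover have "(\<Sum>u<a. Ih n W (\<lambda>x. \<Sum>v<b. puv u v * q' v x) - Ih n Q (\<lambda>x. \<Sum>v<b. puv u v * q' v x)) \<le> Fv"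
      proof -
        have "(\<Sum>u<a. Ih n W (\<lambda>x. \<Sum>v<b. puv u v * q' v x) - Ih n Q (\<lambda>x. \<Sum>v<b. puv u v * q' v x))
            \<le> (\<Sum>u<a. (\<Sum>x<n. \<Sum>v<b. puv u v * q' v x) * Fv)"
          unfolding Fv_def
          by (intro sum_mono Ih_diff_le[OF chW chQ dcss])
             (auto intro!: sum_nonneg mult_nonneg_nonneg pn kernel_nn[OF k])
        also have "\<dots> = (\<Sum>u<a. (\<Sum>v<b. puv u v) * Fv)"
        proof -
          have sw: "(\<Sum>x<n. \<Sum>v<b. puv u v * q' v x) = (\<Sum>v<b. puv u v)" for u
            by (subst sum.swap) (simp add: sum_distrib_left[symmetric] kernel_sum[OF k])
          show ?thesis by (simp add: sw)
        qed
        also have "\<dots> = Fv" using ps by (simp add: sum_distrib_right[symmetric])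
        finally show ?thesis .
      qed
      moreover have "(\<Sum>v<b. \<Sum>u<a. puv u v) * gmin \<le> (\<Sum>v<b. (\<Sum>u<a. puv u v) * G (q' v))"
        by (rule mix_bound[OF pvn k gm])
      ultimately show ?thesis using pvs unfolding B_def by simp
    qed
    have inrs: "B \<in> rate_split_values n W Q \<mu>"
    proof -
      define puv where "puv = (\<lambda>(u::nat) (v::nat). 1 / real n)"
      have d2: "is_dist2 1 n puv" unfolding is_dist2_def puv_def using n_pos by simp
      have "\<mu> * IVY n W n (\<lambda>v. \<Sum>u<1. puv u v) q + IVY_U n W 1 n puv q - IVY_U n Q 1 n puv q
        = \<mu> * Iin n W (\<lambda>x. \<Sum>v<n. (\<Sum>u<1. puv u v) * q v x)
          + (\<Sum>u<1. Ih n W (\<lambda>x. \<Sum>v<n. puv u v * q v x) - Ih n Q (\<lambda>x. \<Sum>v<n. puv u v * q v x))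
          - (\<Sum>v<n. (\<Sum>u<1. puv u v) * G (q v))"
        unfolding G_def by (rule rs_value[OF chW chQ d2 kq])
      also have "\<dots> = \<mu> * Iin n W (\<lambda>x. \<Sum>v<n. 1 / real n * q v x)
          + (Ih n W (\<lambda>x. \<Sum>v<n. 1 / real n * q v x) - Ih n Q (\<lambda>x. \<Sum>v<n. 1 / real n * q v x))
          - (\<Sum>v<n. 1 / real n * G (q v))"
        by (simp add: puv_def)
      also have "Iin n W (\<lambda>x. \<Sum>v<n. 1 / real n * q v x) = CW"
        unfolding CW_def by (rule Iin_cong) (rule qu)
      also have "Ih n W (\<lambda>x. \<Sum>v<n. 1 / real n * q v x) = Ih n W (uniform_in n)"
        by (rule Ih_cong) (rule qu)
      also have "Ih n Q (\<lambda>x. \<Sum>v<n. 1 / real n * q v x) = Ih n Q (uniform_in n)"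
        by (rule Ih_cong) (rule qu)
      also have "Ih n W (uniform_in n) - Ih n Q (uniform_in n) = Fv"
        unfolding Fv_def fsec_def Ih_dist[OF chW ud] Ih_dist[OF chQ ud] ..
      finally have "\<mu> * IVY n W n (\<lambda>v. \<Sum>u<1. puv u v) q + IVY_U n W 1 n puv q - IVY_U n Q 1 n puv q = B"
        unfolding Gq nsum B_def .
      then show ?thesis unfolding rate_split_values_def using d2 kq by blast
    qed
    have bdd: "bdd_above (rate_split_values n W Q \<mu>)" using rsle by (intro bdd_aboveI) 
    have "Sup (rate_split_values n W Q \<mu>) = B" by (rule cSup_eq_maximum[OF inrs rsle])
    then show ?thesis using inpf pfle bdd by blast
  qed
  obtain P2 where P2: "is_dist {0..<n} P2" and
    P2min: "\<And>P. is_dist {0..<n} P \<Longrightarrow> 1 * Iin n W P2 + (-1) * Iin n Q P2 \<le> 1 * Iin n W P + (-1) * Iin n Q P"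
    using exists_min[OF chW chQ n_pos, of 1 "-1"] by blast
  have f2: "fsec n W Q P2 \<le> fsec n W Q P" if "is_dist {0..<n} P" for P
    using P2min[OF that] by (simp add: fsec_def)
  define q where "q = (\<lambda>v x. P2 ((x + v) mod n))"
  have kq: "kernel n n q" unfolding q_def by (rule shift_kernel(1)[OF n_pos P2])
  have qu: "(\<Sum>v<n. (1 / real n) * q v x) = uniform_in n x" if "x < n" for x
    unfolding q_def by (rule shift_kernel(2)[OF n_pos P2 that])
  have fq: "fsec n W Q (q v) = fsec n W Q P2" for v
    unfolding q_def fsec_def shift_val[OF cssW P2] shift_val[OF cssQ P2] ..
  define SC where "SC = {IVY n W b p q - IVY n Q b p q | b p q. is_dist {0..<b} p \<and> kernel b n q}"
  have scle: "t \<le> Fv - fsec n W Q P2" if tin: "t \<in> SC" for t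
  proof -
    obtain b p q' where t: "t = IVY n W b p q' - IVY n Q b p q'"
      and dp: "is_dist {0..<b} p" and k: "kernel b n q'"
      using tin unfolding SC_def by blast
    have pn: "\<And>v. v < b \<Longrightarrow> 0 \<le> p v" and ps: "(\<Sum>v<b. p v) = 1"
      using dp by (auto simp: is_dist_def atLeast0LessThan)
    have dX: "is_dist {0..<n} (\<lambda>x. \<Sum>v<b. p v * q' v x)" by (rule mix_dist[OF pn ps k])
    have "t = fsec n W Q (\<lambda>x. \<Sum>v<b. p v * q' v x) - (\<Sum>v<b. p v * fsec n W Q (q' v))"
      unfolding t by (rule sc_value[OF chW chQ pn k])
    moreover have "fsec n W Q (\<lambda>x. \<Sum>v<b. p v * q' v x) \<le> Fv" unfolding Fv_def by (rule fmax[OF dX])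
    moreover have "(\<Sum>v<b. p v) * fsec n W Q P2 \<le> (\<Sum>v<b. p v * fsec n W Q (q' v))"
      by (rule mix_bound[OF pn k f2])
    ultimately show ?thesis using ps by simp
  qed
  have inSC: "Fv - fsec n W Q P2 \<in> SC"
  proof -
    have "IVY n W n (\<lambda>v. 1 / real n) q - IVY n Q n (\<lambda>v. 1 / real n) q
       = fsec n W Q (\<lambda>x. \<Sum>v<n. 1 / real n * q v x) - (\<Sum>v<n. 1 / real n * fsec n W Q (q v))"
      by (rule sc_value[OF chW chQ _ kq]) simp
    also have "fsec n W Q (\<lambda>x. \<Sum>v<n. 1 / real n * q v x) = Fv"
      unfolding Fv_def fsec_def using qu by (metis (no_types, lifting) Iin_cong)
    finally have "IVY n W n (\<lambda>v. 1 / real n) q - IVY n Q n (\<lambda>v. 1 / real n) q = Fv - fsec n W Q P2"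
      unfolding fq nsum .
    then show ?thesis unfolding SC_def using kq unif_dist[OF n_pos]
      by (auto simp: uniform_in_def intro!: exI[of _ n] exI[of _ "\<lambda>v. 1 / real n"] exI[of _ q])
  qed
  have "secrecy_capacity n W Q = Fv - fsec n W Q P2"
    unfolding secrecy_capacity_def SC_def[symmetric] by (rule cSup_eq_maximum[OF inSC scle])
  then have part2: "\<exists>P1 P2. is_dist {0..<n} P1 \<and> is_dist {0..<n} P2 \<and>
              (\<forall>P. is_dist {0..<n} P \<longrightarrow> fsec n W Q P2 \<le> fsec n W Q P \<and> fsec n W Q P \<le> fsec n W Q P1) \<and>
              secrecy_capacity n W Q = fsec n W Q P1 - fsec n W Q P2"
    using ud P2 f2 fmax unfolding Fv_def by blast
  show ?thesis using part1 part2 by blast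
qed


end
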